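(* Let $\Sigma$ be an alphabet with $|\Sigma|\ge3$, $k\ge2$, and $f\colon(\Sigma^* )^k\to\Sigma^*$ RCP. Assume: ( * ) for every $i\in\{1,\ldots,k\}$ and every $u\in\Sigma^*$, the $(k-1)$-ary function $g_{i,u}(x_1,\ldots,x_{i-1},x_{i+1},\ldots,x_k)=f(x_1,\ldots,x_{i-1},u,x_{i+1},\ldots,x_k)$ satisfies exactly one of the conditions ($C_1$), ($C_2$), ($C_3$) below (as a $(k-1)$-ary function); ( ** ) there exist $y\in\Sigma^*\setminus\{\varepsilon\}$ and an index $i\in\{2,\ldots,k\}$ such that $f(y,x_2,\ldots,x_k)\in x_i\Sigma^*$ for all $(x_2,\ldots,x_k)\in(\Sigma^* )^{k-1}$. Then, for this index $i$, $f(z_1,z_2,\ldots,z_k)\in z_i\Sigma^*$ for all $(z_1,\ldots,z_k)\in(\Sigma^* )^k$.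
   Context: $\Sigma^*$ is the free monoid over $\Sigma$ (finite words, concatenation, empty word $\varepsilon$). For a word $w$, $w\Sigma^*$ denotes the set of words having $w$ as a prefix. A function $f\colon(\Sigma^* )^k\to\Sigma^*$ is RCP if for every monoid morphism $\varphi\colon\Sigma^*\to\Sigma^*$ and all $u_1,\ldots,u_k,v_1,\ldots,v_k$ with $\varphi(u_i)=\varphi(v_i)$ for all $i$, we have $\varphi(f(u_1,\ldots,u_k))=\varphi(f(v_1,\ldots,v_k))$. For an $m$-ary function $h\colon(\Sigma^* )^m\to\Sigma^*$ the conditions are: ($C_1$) there exists $b\in\Sigma$ with $h(x_1,\ldots,x_m)\in b\Sigma^*$ for all $x_1,\ldots,x_m\in\Sigma^*$; ($C_2$) there exists $j\in\{1,\ldots,m\}$ with $h(x_1,\ldots,x_m)\in x_j\Sigma^*$ for all $x_1,\ldots,x_m\in\Sigma^*$; ($C_3$) $h(x_1,\ldots,x_m)=\varepsilon$ for all $x_1,\ldots,x_m\in\Sigma^*$. *)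

theory Defs
  imports Main
begin

text \<open>Words over the alphabet 'a are lists; an m-ary function on words is a function on
  word lists, of which only the arguments of length m matter.  Argument positions are
  0-based (position i here is position i+1 in the paper).\<close>

definition monoid_morphism :: "('a list \<Rightarrow> 'a list) \<Rightarrow> bool" where
  "monoid_morphism \<phi> \<longleftrightarrow> \<phi> [] = [] \<and> (\<forall>u v. \<phi> (u @ v) = \<phi> u @ \<phi> v)"

definition RCP :: "nat \<Rightarrow> ('a list list \<Rightarrow> 'a list) \<Rightarrow> bool" where
  "RCP k f \<longleftrightarrow> (\<forall>\<phi> us vs. monoid_morphism \<phi> \<and> length us = k \<and> length vs = k \<and>
      (\<forall>i<k. \<phi> (us ! i) = \<phi> (vs ! i)) \<longrightarrow> \<phi> (f us) = \<phi> (f vs))"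

definition has_prefix :: "'a list \<Rightarrow> 'a list \<Rightarrow> bool" where
  "has_prefix w x \<longleftrightarrow> (\<exists>r. w = x @ r)"

definition C1 :: "nat \<Rightarrow> ('a list list \<Rightarrow> 'a list) \<Rightarrow> bool" where
  "C1 m h \<longleftrightarrow> (\<exists>b. \<forall>xs. length xs = m \<longrightarrow> has_prefix (h xs) [b])"

definition C2 :: "nat \<Rightarrow> ('a list list \<Rightarrow> 'a list) \<Rightarrow> bool" where
  "C2 m h \<longleftrightarrow> (\<exists>j<m. \<forall>xs. length xs = m \<longrightarrow> has_prefix (h xs) (xs ! j))"

definition C3 :: "nat \<Rightarrow> ('a list list \<Rightarrow> 'a list) \<Rightarrow> bool" where
  "C3 m h \<longleftrightarrow> (\<forall>xs. length xs = m \<longrightarrow> h xs = [])"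

definition exactly_one_C :: "nat \<Rightarrow> ('a list list \<Rightarrow> 'a list) \<Rightarrow> bool" where
  "exactly_one_C m h \<longleftrightarrow>
     (C1 m h \<and> \<not> C2 m h \<and> \<not> C3 m h) \<or> (\<not> C1 m h \<and> C2 m h \<and> \<not> C3 m h) \<or>
     (\<not> C1 m h \<and> \<not> C2 m h \<and> C3 m h)"

definition fix_arg :: "('a list list \<Rightarrow> 'a list) \<Rightarrow> nat \<Rightarrow> 'a list \<Rightarrow> 'a list list \<Rightarrow> 'a list" where
  "fix_arg f i u xs = f (take i xs @ u # drop i xs)"

end

theory Submission
  imports Defs
begin

definition SS :: "('a list list \<Rightarrow> 'a list) \<Rightarrow> nat \<Rightarrow> nat \<Rightarrow> 'a list \<Rightarrow> bool" where
  "SS f k i u \<longleftrightarrow> (\<forall>xs. length xs = k - 1 \<longrightarrow> has_prefix (f (u # xs)) (xs ! (i - 1)))"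

lemma mm_app: "monoid_morphism \<psi> \<Longrightarrow> \<psi> (a @ b) = \<psi> a @ \<psi> b"
  by (simp add: monoid_morphism_def)
lemma mm_nil: "monoid_morphism \<psi> \<Longrightarrow> \<psi> [] = []"
  by (simp add: monoid_morphism_def)

context
  fixes f :: "'a list list \<Rightarrow> 'a list" and k i :: nat and y :: "'a list"
  assumes rcp: "RCP k f" and k2: "k \<ge> 2" and i1: "1 \<le> i" and ik: "i < k"
    and Sy: "SS f k i y"
begin

lemma rcp_inst:
  assumes "monoid_morphism \<psi>" "\<psi> u = \<psi> y" "length xs = k - 1"
  shows "\<psi> (f (u # xs)) = \<psi> (f (y # xs))"
proof -
  have "\<forall>j<k. \<psi> ((u#xs) ! j) = \<psi> ((y#xs) ! j)"
    using assms(2) by (auto simp: nth_Cons split: nat.splits)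
  then show ?thesis using rcp assms k2 unfolding RCP_def by auto
qed

lemma y_img:
  assumes "monoid_morphism \<psi>" "length xs = k - 1"
  shows "\<exists>r. \<psi> (f (y # xs)) = \<psi> (xs ! (i - 1)) @ r"
proof -
  obtain r where "f (y # xs) = xs ! (i - 1) @ r"
    using Sy assms(2) unfolding SS_def has_prefix_def by blast
  then show ?thesis using mm_app[OF assms(1)] by auto
qed

lemma L_C3:
  assumes mm: "monoid_morphism \<psi>" and e: "\<psi> u = \<psi> y" and c: "\<psi> [c] = [c]"
    and h: "\<forall>xs. length xs = k - 1 \<longrightarrow> f (u # xs) = []"
  shows False
proof -
  define xs where "xs = replicate (k - 1) [c]"
  have l: "length xs = k - 1" by (simp add: xs_def)
  have n: "xs ! (i - 1) = [c]" using i1 ik by (simp add: xs_def)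
  obtain r where r: "\<psi> (f (y # xs)) = [c] @ r" using y_img[OF mm l] n c by auto
  have "\<psi> (f (u # xs)) = []" using h l mm_nil[OF mm] by simp
  then show False using rcp_inst[OF mm e l] r by simp
qed

lemma L_C1:
  assumes mm: "monoid_morphism \<psi>" and e: "\<psi> u = \<psi> y" and c: "\<psi> [c] = [c]"
    and ne: "\<psi> [b] \<noteq> []" and hd: "hd (\<psi> [b]) \<noteq> c"
    and h: "\<forall>xs. length xs = k - 1 \<longrightarrow> has_prefix (f (u # xs)) [b]"
  shows False
proof -
  define xs where "xs = replicate (k - 1) [c]"
  have l: "length xs = k - 1" by (simp add: xs_def)
  have n: "xs ! (i - 1) = [c]" using i1 ik by (simp add: xs_def)
  obtain r where r: "\<psi> (f (y # xs)) = [c] @ r" using y_img[OF mm l] n c by auto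
  obtain s where s: "f (u # xs) = [b] @ s" using h l unfolding has_prefix_def by blast
  have "\<psi> (f (u # xs)) = \<psi> [b] @ \<psi> s" using s mm_app[OF mm, of "[b]" s] by simp
  then have "hd (\<psi> (f (u # xs))) = hd (\<psi> [b])" using ne by simp
  then show False using rcp_inst[OF mm e l] r hd by simp
qed

lemma L_C2:
  assumes mm: "monoid_morphism \<psi>" and e: "\<psi> u = \<psi> y" and c: "\<psi> [c] = [c]"
    and b: "\<psi> [b] = [b]" and bc: "b \<noteq> c" and j: "j < k - 1" "j \<noteq> i - 1"
    and h: "\<forall>xs. length xs = k - 1 \<longrightarrow> has_prefix (f (u # xs)) (xs ! j)"
  shows False
proof -
  define xs where "xs = (replicate (k - 1) [b])[i - 1 := [c]]"
  have l: "length xs = k - 1" by (simp add: xs_def)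
  have n: "xs ! (i - 1) = [c]" using i1 ik by (simp add: xs_def)
  have nj: "xs ! j = [b]" using j by (simp add: xs_def)
  obtain r where r: "\<psi> (f (y # xs)) = [c] @ r" using y_img[OF mm l] n c by auto
  obtain s where s: "f (u # xs) = [b] @ s" using h l nj unfolding has_prefix_def by metis
  have "\<psi> (f (u # xs)) = [b] @ \<psi> s" using s mm_app[OF mm, of "[b]" s] b by simp
  then show False using rcp_inst[OF mm e l] r bc by simp
qed

lemma S_of:
  assumes ex1: "exactly_one_C (k - 1) (fix_arg f 0 u)"
    and n3: "\<not> (\<forall>xs. length xs = k - 1 \<longrightarrow> f (u # xs) = [])"
    and n1: "\<forall>b. \<not> (\<forall>xs. length xs = k - 1 \<longrightarrow> has_prefix (f (u # xs)) [b])"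
    and n2: "\<forall>j<k-1. j \<noteq> i - 1 \<longrightarrow> \<not> (\<forall>xs. length xs = k - 1 \<longrightarrow> has_prefix (f (u # xs)) (xs ! j))"
  shows "SS f k i u"
proof -
  have fa: "fix_arg f 0 u xs = f (u # xs)" for xs by (simp add: fix_arg_def)
  from ex1 have "C2 (k - 1) (fix_arg f 0 u)"
    using n3 n1 unfolding exactly_one_C_def C1_def C3_def fa by blast
  then obtain j where j: "j < k - 1" and hj: "\<forall>xs. length xs = k - 1 \<longrightarrow> has_prefix (f (u # xs)) (xs ! j)"
    unfolding C2_def fa by blast
  with n2 have "j = i - 1" by blast
  with hj show ?thesis unfolding SS_def by blast
qed

lemma transfer:
  assumes ex1: "exactly_one_C (k - 1) (fix_arg f 0 u)"
    and mm: "monoid_morphism \<psi>" and ner: "\<forall>e. \<psi> [e] \<noteq> []"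
    and b: "\<psi> [b] = [b]" and c: "\<psi> [c] = [c]" and bc: "b \<noteq> c" and e: "\<psi> u = \<psi> y"
  shows "SS f k i u"
proof (rule S_of[OF ex1])
  show "\<not> (\<forall>xs. length xs = k - 1 \<longrightarrow> f (u # xs) = [])" using L_C3[OF mm e c] by blast
  show "\<forall>j<k-1. j \<noteq> i - 1 \<longrightarrow> \<not> (\<forall>xs. length xs = k - 1 \<longrightarrow> has_prefix (f (u # xs)) (xs ! j))"
    using L_C2[OF mm e c b bc] by blast
  show "\<forall>a. \<not> (\<forall>xs. length xs = k - 1 \<longrightarrow> has_prefix (f (u # xs)) [a])"
  proof (intro allI notI)
    fix a assume h: "\<forall>xs. length xs = k - 1 \<longrightarrow> has_prefix (f (u # xs)) [a]"
    show False
    proof (cases "hd (\<psi> [a]) = c")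
      case True
      then have "hd (\<psi> [a]) \<noteq> b" using bc by simp
      then show False using L_C1[OF mm e b _ _ h] ner by blast
    next
      case False
      then show False using L_C1[OF mm e c _ _ h] ner by blast
    qed
  qed
qed

end


definition rp :: "'a \<Rightarrow> 'a list \<Rightarrow> 'a list \<Rightarrow> 'a list" where
  "rp x r w = concat (map (\<lambda>l. if l = x then r else [l]) w)"

lemma rp_mm: "monoid_morphism (rp x r)"
  by (simp add: monoid_morphism_def rp_def)

definition er :: "'a \<Rightarrow> 'a list \<Rightarrow> 'a list" where
  "er x w = filter (\<lambda>l. l \<noteq> x) w"

lemma er_mm: "monoid_morphism (er x)"
  by (simp add: monoid_morphism_def er_def)

lemma two_others:
  assumes "card (UNIV :: 'a::finite set) \<ge> 3"
  shows "\<exists>b c. b \<noteq> c \<and> b \<noteq> (x::'a) \<and> c \<noteq> x"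
proof -
  have "card (UNIV - {x}) \<ge> 2" using assms by (simp add: card_Diff_singleton)
  then have "UNIV - {x} \<noteq> {}" by (metis card.empty not_numeral_le_zero)
  then obtain b where b: "b \<in> UNIV - {x}" by blast
  have "card (UNIV - {x} - {b}) \<ge> 1" using \<open>card (UNIV - {x}) \<ge> 2\<close> b
    by (simp add: card_Diff_singleton)
  then have "UNIV - {x} - {b} \<noteq> {}" by (metis card.empty not_one_le_zero)
  then obtain c where "c \<in> UNIV - {x} - {b}" by blast
  then show ?thesis using b by blast
qed

lemma transfer_rp:
  fixes f :: "('a::finite) list list \<Rightarrow> 'a list"
  assumes card: "card (UNIV :: 'a set) \<ge> 3" and rcp: "RCP k f" and k2: "k \<ge> 2"
    and i1: "1 \<le> i" and ik: "i < k"
    and ex1: "\<forall>u. exactly_one_C (k - 1) (fix_arg f 0 u)"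
    and r: "r \<noteq> []" and e: "rp x r u = rp x r v"
  shows "SS f k i u \<longleftrightarrow> SS f k i v"
proof -
  obtain b c where bc: "b \<noteq> c" "b \<noteq> x" "c \<noteq> x" using two_others[OF card] by blast
  have ner: "\<forall>l. rp x r [l] \<noteq> []" using r by (simp add: rp_def)
  have b: "rp x r [b] = [b]" and c: "rp x r [c] = [c]" using bc by (simp_all add: rp_def)
  show ?thesis
  proof
    assume "SS f k i v" then show "SS f k i u"
      using transfer[OF rcp k2 i1 ik _ _ rp_mm ner b c bc(1)] ex1 e by blast
  next
    assume "SS f k i u" then show "SS f k i v"
      using transfer[OF rcp k2 i1 ik _ _ rp_mm ner b c bc(1)] ex1 e[symmetric] by blast
  qed
qed

lemma chain:
  fixes f :: "('a::finite) list list \<Rightarrow> 'a list"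
  assumes card: "card (UNIV :: 'a set) \<ge> 3" and rcp: "RCP k f" and k2: "k \<ge> 2"
    and i1: "1 \<le> i" and ik: "i < k"
    and ex1: "\<forall>u. exactly_one_C (k - 1) (fix_arg f 0 u)"
  shows "w \<noteq> [] \<Longrightarrow> SS f k i w \<longleftrightarrow> SS f k i [d]"
proof -
  note T = transfer_rp[OF card rcp k2 i1 ik ex1]
  have s1: "SS f k i (p @ x # q) \<longleftrightarrow> SS f k i (p @ d' # q)" for p q x d'
  proof (cases "d' = x")
    case False
    have "rp x [d'] (p @ x # q) = rp x [d'] (p @ d' # q)" using False by (simp add: rp_def)
    then show ?thesis using T[where r="[d']" and x=x] by blast
  qed simp
  have s2: "SS f k i (d' # q) \<longleftrightarrow> SS f k i (d' # d' # q)" for q d'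
  proof -
    obtain x where x: "x \<noteq> d'" using two_others[OF card, of d'] by blast
    have "rp x [d', d'] (x # q) = rp x [d', d'] (d' # d' # q)" using x by (simp add: rp_def)
    then have "SS f k i (x # q) \<longleftrightarrow> SS f k i (d' # d' # q)" using T[where r="[d',d']" and x=x] by blast
    moreover have "SS f k i (x # q) \<longleftrightarrow> SS f k i (d' # q)" using s1[of "[]" x q d'] by simp
    ultimately show ?thesis by simp
  qed
  show "w \<noteq> [] \<Longrightarrow> SS f k i w \<longleftrightarrow> SS f k i [d]"
  proof (induction w)
    case Nil then show ?case by simp
  next
    case (Cons x w')
    show ?case
    proof (cases w')
      case Nil
      then show ?thesis using s1[of "[]" x "[]" d] by simp
    next
      case (Cons z w'')
      have "SS f k i (x # w') \<longleftrightarrow> SS f k i (d # z # w'')" using s1[of "[]" x w' d] Cons by simp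
      also have "\<dots> \<longleftrightarrow> SS f k i (d # d # w'')" using s1[of "[d]" z w'' d] by simp
      also have "\<dots> \<longleftrightarrow> SS f k i (d # w'')" using s2[of d w''] by (rule sym)
      also have "\<dots> \<longleftrightarrow> SS f k i w'" using s1[of "[]" z w'' d] Cons by simp
      also have "\<dots> \<longleftrightarrow> SS f k i [d]" using Cons.IH Cons by simp
      finally show ?thesis .
    qed
  qed
qed

lemma S_empty:
  fixes f :: "('a::finite) list list \<Rightarrow> 'a list"
  assumes card: "card (UNIV :: 'a set) \<ge> 3" and rcp: "RCP k f" and k2: "k \<ge> 2"
    and i1: "1 \<le> i" and ik: "i < k"
    and ex1: "exactly_one_C (k - 1) (fix_arg f 0 [])"
    and all1: "\<forall>x. SS f k i [x]"
  shows "SS f k i []"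
proof (rule S_of[OF rcp k2 i1 ik all1[rule_format] ex1])
  obtain x0 :: 'a where True by blast
  obtain b c where bc: "b \<noteq> c" "b \<noteq> x0" "c \<noteq> x0" using two_others[OF card] by blast
  have e0: "er x0 [] = er x0 [x0]" by (simp add: er_def)
  have b: "er x0 [b] = [b]" and c: "er x0 [c] = [c]" using bc by (simp_all add: er_def)
  show "\<not> (\<forall>xs. length xs = k - 1 \<longrightarrow> f ([] # xs) = [])"
    using L_C3[OF rcp k2 i1 ik all1[rule_format] er_mm e0 c] by blast
  show "\<forall>j<k-1. j \<noteq> i - 1 \<longrightarrow> \<not> (\<forall>xs. length xs = k - 1 \<longrightarrow> has_prefix (f ([] # xs)) (xs ! j))"
    using L_C2[OF rcp k2 i1 ik all1[rule_format] er_mm e0 c b bc(1)] by blast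
  show "\<forall>a. \<not> (\<forall>xs. length xs = k - 1 \<longrightarrow> has_prefix (f ([] # xs)) [a])"
  proof (intro allI notI)
    fix a assume h: "\<forall>xs. length xs = k - 1 \<longrightarrow> has_prefix (f ([] # xs)) [a]"
    obtain x' where x': "x' \<noteq> a" using two_others[OF card, of a] by blast
    obtain c' where c': "c' \<noteq> x'" "c' \<noteq> a" using two_others[OF card, of x'] by blast
    have e1: "er x' [] = er x' [x']" by (simp add: er_def)
    have c1: "er x' [c'] = [c']" and a1: "er x' [a] = [a]" using c' x' by (simp_all add: er_def)
    show False using L_C1[OF rcp k2 i1 ik all1[rule_format] er_mm e1 c1 _ _ h] a1 c' by simp
  qed
qed

theorem mainTheorem17:
  fixes f :: "('a::finite) list list \<Rightarrow> 'a list" and k :: nat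
  assumes "card (UNIV :: 'a set) \<ge> 3"
    and "k \<ge> 2"
    and "RCP k f"
    and "\<forall>i<k. \<forall>u. exactly_one_C (k - 1) (fix_arg f i u)"
    and "y \<noteq> []" and "1 \<le> i" and "i < k"
    and "\<forall>xs. length xs = k - 1 \<longrightarrow> has_prefix (f (y # xs)) (xs ! (i - 1))"
  shows "\<forall>zs. length zs = k \<longrightarrow> has_prefix (f zs) (zs ! i)"
proof -
  have ex1: "\<forall>u. exactly_one_C (k - 1) (fix_arg f 0 u)" using assms(2,4) by simp
  note C = chain[OF assms(1,3,2,6,7) ex1]
  have Sy: "SS f k i y" using assms(8) by (simp add: SS_def)
  have ne: "SS f k i w" if "w \<noteq> []" for w
    using C[OF that] C[OF assms(5)] Sy by blast
  have e: "SS f k i []"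
    using S_empty[OF assms(1,3,2,6,7) ex1[rule_format]] ne by simp
  have all: "SS f k i w" for w using ne e by (cases w) auto
  show ?thesis
  proof (intro allI impI)
    fix zs :: "'a list list" assume l: "length zs = k"
    then obtain z xs where zs: "zs = z # xs" using assms(2) by (cases zs) auto
    have "length xs = k - 1" using l zs by simp
    then have "has_prefix (f (z # xs)) (xs ! (i - 1))" using all[of z] by (simp add: SS_def)
    then show "has_prefix (f zs) (zs ! i)" using zs assms(6) by (cases i) auto
  qed
qed

end
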